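(* Let $B = M \cup \{\omega_1,\ldots,\omega_p\}$ with $p\ge 1$ and $\omega_1,\ldots,\omega_p \in P_2\setminus M$, where gates computing functions of $M$ have weight $0$ and gates computing $\omega_1,\ldots,\omega_p$ have weight $1$. Then there exists a constant $c(B)$ (depending only on $B$) such that for every finite system $F=\{f_1(x_1,\ldots,x_n),\ldots,f_m(x_1,\ldots,x_n)\}$ of Boolean functions $$\left\lceil \log_2 (d(F)+1)\right\rceil - c(B) \;\le\; I_B(F) \;\le\; \left\lceil \log_2 (d(F)+1)\right\rceil .$$
   Context: $P_2$ denotes the set of all Boolean functions and $M\subset P_2$ the set of all monotone Boolean functions (including the constants). Tuples in $E_2^n=\{0,1\}^n$ are compared componentwise: $\tilde\alpha\le\tilde\beta$ iff $\alpha_j\le\beta_j$ for all $j$. An increasing chain is a sequence of pairwise distinct tuples $\tilde\alpha_1,\ldots,\tilde\alpha_r\in E_2^n$ with $\tilde\alpha_i\le\tilde\alpha_{i+1}$ for $i=1,\ldots,r-1$. For a Boolean function $f$ of $x_1,\ldots,x_n$, an ordered pair $(\tilde\alpha,\tilde\beta)$ of tuples with $\tilde\alpha\le\tilde\beta$ and $f(\tilde\alpha)>f(\tilde\beta)$ is a jump of $f$; for a system $F$ of functions of $x_1,\ldots,x_n$, a pair is a jump of $F$ if it is a jump of some $f\in F$. For a chain $C=(\tilde\alpha_1,\ldots,\tilde\alpha_r)$, the decrease $d_C(F)$ is the number of indices $i$ such that $(\tilde\alpha_i,\tilde\alpha_{i+1})$ is a jump of $F$, and the decrease $d(F)$ is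 the maximum of $d_C(F)$ over all chains $C$ (for a single function $f$, $d(f)=d(\{f\})$). A circuit over $B$ is a Boolean circuit (directed acyclic graph of gates with inputs $x_1,\ldots,x_n$) each of whose gates computes a function of $B$; it realizes $F$ if each $f_i$ is computed at some gate or input. Its weight is the number of gates computing functions among $\omega_1,\ldots,\omega_p$. The inversion complexity $I_B(F)$ is the minimum weight of a circuit over $B$ realizing $F$. *)

theory Defs
  imports Complex_Main
begin

text \<open>Tuples of E_2^n are boolean lists of length n; a Boolean function of
x_1..x_n is a map bool list => bool (only its values on length-n lists matter).
The order on bool is False < True.\<close>

definition tuple_le :: "bool list \<Rightarrow> bool list \<Rightarrow> bool" where
  "tuple_le a b \<longleftrightarrow> length a = length b \<and> (\<forall>i<length a. a ! i \<le> b ! i)"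

definition monotone_fun :: "nat \<Rightarrow> (bool list \<Rightarrow> bool) \<Rightarrow> bool" where
  "monotone_fun k h \<longleftrightarrow>
     (\<forall>a b. length a = k \<longrightarrow> length b = k \<longrightarrow> tuple_le a b \<longrightarrow> h a \<le> h b)"

text \<open>The non-monotone basis functions omega_1..omega_p are given as a list
of (arity, function) pairs.  A gate is labelled either by an arbitrary monotone
function (weight 0) or by an index j of omega_(j+1) (weight 1).\<close>
datatype glabel = Mono "bool list \<Rightarrow> bool" | Om nat

type_synonym basis_om = "(nat \<times> (bool list \<Rightarrow> bool)) list"
type_synonym circuit = "(glabel \<times> nat list) list"

definition apply_label :: "basis_om \<Rightarrow> glabel \<Rightarrow> bool list \<Rightarrow> bool" where
  "apply_label om l vs = (case l of Mono h \<Rightarrow> h vs | Om j \<Rightarrow> snd (om ! j) vs)"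

text \<open>Node values: nodes 0..n-1 are the inputs, node n+i is gate i.\<close>
fun run :: "basis_om \<Rightarrow> circuit \<Rightarrow> bool list \<Rightarrow> bool list" where
  "run om [] vals = vals"
| "run om ((l, args) # gs) vals =
     run om gs (vals @ [apply_label om l (map (\<lambda>i. vals ! i) args)])"

definition valid_circuit :: "basis_om \<Rightarrow> nat \<Rightarrow> circuit \<Rightarrow> bool" where
  "valid_circuit om n gs \<longleftrightarrow>
     (\<forall>i<length gs. (\<forall>a\<in>set (snd (gs ! i)). a < n + i) \<and>
        (case fst (gs ! i) of
           Mono h \<Rightarrow> monotone_fun (length (snd (gs ! i))) h
         | Om j \<Rightarrow> j < length om \<and> length (snd (gs ! i)) = fst (om ! j)))"

definition realizes :: "basis_om \<Rightarrow> nat \<Rightarrow> circuit \<Rightarrow> (bool list \<Rightarrow> bool) list \<Rightarrow> bool" where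
  "realizes om n gs fs \<longleftrightarrow>
     (\<forall>f\<in>set fs. \<exists>v < n + length gs. \<forall>x. length x = n \<longrightarrow> run om gs x ! v = f x)"

definition weight :: "circuit \<Rightarrow> nat" where
  "weight gs = length (filter (\<lambda>g. case fst g of Om _ \<Rightarrow> True | Mono _ \<Rightarrow> False) gs)"

definition inv_complexity :: "basis_om \<Rightarrow> nat \<Rightarrow> (bool list \<Rightarrow> bool) list \<Rightarrow> nat" where
  "inv_complexity om n fs =
     (LEAST w. \<exists>gs. valid_circuit om n gs \<and> realizes om n gs fs \<and> weight gs = w)"

definition is_chain :: "nat \<Rightarrow> bool list list \<Rightarrow> bool" where
  "is_chain n C \<longleftrightarrow> C \<noteq> [] \<and> distinct C \<and> (\<forall>a\<in>set C. length a = n) \<and>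
     (\<forall>i. Suc i < length C \<longrightarrow> tuple_le (C ! i) (C ! Suc i))"

definition jump :: "(bool list \<Rightarrow> bool) \<Rightarrow> bool list \<Rightarrow> bool list \<Rightarrow> bool" where
  "jump f a b \<longleftrightarrow> tuple_le a b \<and> f a > f b"

definition jumpF :: "(bool list \<Rightarrow> bool) list \<Rightarrow> bool list \<Rightarrow> bool list \<Rightarrow> bool" where
  "jumpF fs a b \<longleftrightarrow> (\<exists>f\<in>set fs. jump f a b)"

definition decr_chain :: "(bool list \<Rightarrow> bool) list \<Rightarrow> bool list list \<Rightarrow> nat" where
  "decr_chain fs C = card {i. Suc i < length C \<and> jumpF fs (C ! i) (C ! Suc i)}"

definition decrease :: "nat \<Rightarrow> (bool list \<Rightarrow> bool) list \<Rightarrow> nat" where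
  "decrease n fs = Max {decr_chain fs C | C. is_chain n C}"

end

theory Submission
  imports Defs
begin


lemma tuple_le_refl: "tuple_le a a" by (simp add: tuple_le_def)

lemma tuple_le_trans: "tuple_le a b \<Longrightarrow> tuple_le b c \<Longrightarrow> tuple_le a c"
  unfolding tuple_le_def by (metis order_trans)

lemma tuple_le_antisym: "tuple_le a b \<Longrightarrow> tuple_le b a \<Longrightarrow> a = b"
  unfolding tuple_le_def by (metis nth_equalityI order_antisym)

lemma tuple_le_append:
  assumes l: "length a1 = length b1"
  shows "tuple_le (a1 @ a2) (b1 @ b2) \<longleftrightarrow> tuple_le a1 b1 \<and> tuple_le a2 b2"
proof
  assume h: "tuple_le (a1 @ a2) (b1 @ b2)"
  have h2: "\<And>i. i < length a1 + length a2 \<Longrightarrow> (a1 @ a2) ! i \<le> (b1 @ b2) ! i" using h by (simp add: tuple_le_def)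
  have la: "length a2 = length b2" using h l by (simp add: tuple_le_def)
  show "tuple_le a1 b1 \<and> tuple_le a2 b2"
    unfolding tuple_le_def
  proof (intro conjI allI impI l la)
    fix i assume "i < length a1" then show "a1 ! i \<le> b1 ! i" using h2[of i] l by (simp add: nth_append)
  next
    fix i assume "i < length a2" then show "a2 ! i \<le> b2 ! i" using h2[of "length a1 + i"] l by (simp add: nth_append)
  qed
next
  assume "tuple_le a1 b1 \<and> tuple_le a2 b2"
  then show "tuple_le (a1 @ a2) (b1 @ b2)" using l by (auto simp: tuple_le_def nth_append)
qed

lemma tuple_le_map: "tuple_le (map f xs) (map g xs) \<longleftrightarrow> (\<forall>a\<in>set xs. f a \<le> g a)"
  unfolding tuple_le_def by (auto simp: in_set_conv_nth) (metis nth_mem)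

lemma run_length: "length (run om gs vals) = length vals + length gs"
  by (induction gs arbitrary: vals) auto

lemma run_prefix: "v < length vals \<Longrightarrow> run om gs vals ! v = vals ! v"
  by (induction gs arbitrary: vals) (auto simp: nth_append)

lemma run_append: "run om (xs @ ys) vals = run om ys (run om xs vals)"
  by (induction xs arbitrary: vals) auto

lemma run_gate: "i < length gs \<Longrightarrow> run om gs vals ! (length vals + i) =
   apply_label om (fst (gs!i)) (map (\<lambda>a. run om (take i gs) vals ! a) (snd (gs!i)))"
proof (induction gs arbitrary: vals i)
  case Nil then show ?case by simp
next
  case (Cons g gs)
  obtain l args where g: "g = (l, args)" by fastforce
  show ?case
  proof (cases i)
    case 0 then show ?thesis using g by (simp add: run_prefix)
  next
    case (Suc j)
    have "run om (g # gs) vals = run om gs (vals @ [apply_label om l (map ((!) vals) args)])" using g by simp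
    moreover have "take i (g # gs) = g # take j gs" using Suc by simp
    moreover have "length vals + i = length (vals @ [apply_label om l (map ((!) vals) args)]) + j" using Suc by simp
    ultimately show ?thesis using Cons.IH[of j "vals @ [apply_label om l (map ((!) vals) args)]"] Cons.prems Suc g by simp
  qed
qed

lemma run_take: "i \<le> length gs \<Longrightarrow> a < length vals + i \<Longrightarrow> run om gs vals ! a = run om (take i gs) vals ! a"
proof -
  assume "i \<le> length gs" "a < length vals + i"
  have "run om gs vals = run om (drop i gs) (run om (take i gs) vals)"
    by (metis append_take_drop_id run_append)
  then show ?thesis using \<open>i \<le> length gs\<close> \<open>a < length vals + i\<close> by (simp add: run_prefix run_length)
qed

lemma node_eq:
  assumes "valid_circuit om n gs" "length x = n" "i < length gs"
  shows "run om gs x ! (n+i) = apply_label om (fst (gs!i)) (map (\<lambda>a. run om gs x ! a) (snd (gs!i)))"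
proof -
  have args: "\<forall>a\<in>set (snd (gs!i)). a < n + i" using assms unfolding valid_circuit_def by blast
  have "run om gs x ! (n+i) = apply_label om (fst (gs!i)) (map (\<lambda>a. run om (take i gs) x ! a) (snd (gs!i)))"
    using run_gate[OF assms(3), of om x] assms(2) by simp
  also have "map (\<lambda>a. run om (take i gs) x ! a) (snd (gs!i)) = map (\<lambda>a. run om gs x ! a) (snd (gs!i))"
    using args assms run_take[of i gs _ x om] by (auto intro!: map_cong)
  finally show ?thesis .
qed

lemma input_eq: "v < n \<Longrightarrow> length x = n \<Longrightarrow> run om gs x ! v = x ! v"
  by (simp add: run_prefix)

definition valid_gate :: "basis_om \<Rightarrow> nat \<Rightarrow> glabel \<times> nat list \<Rightarrow> bool" where
  "valid_gate om m g \<longleftrightarrow> (\<forall>a\<in>set (snd g). a < m) \<and>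
        (case fst g of
           Mono h \<Rightarrow> monotone_fun (length (snd g)) h
         | Om j \<Rightarrow> j < length om \<and> length (snd g) = fst (om ! j))"

lemma valid_Nil: "valid_circuit om n []" by (simp add: valid_circuit_def)

lemma valid_Cons: "valid_circuit om n (g # gs) \<longleftrightarrow> valid_gate om n g \<and> valid_circuit om (Suc n) gs"
proof
  assume h: "valid_circuit om n (g # gs)"
  have h0: "valid_gate om n g" using h[unfolded valid_circuit_def, rule_format, of 0] by (auto simp: valid_gate_def split: glabel.splits)
  have "valid_circuit om (Suc n) gs" unfolding valid_circuit_def
  proof (intro allI impI)
    fix i assume "i < length gs"
    then show "(\<forall>a\<in>set (snd (gs ! i)). a < Suc n + i) \<and>
        (case fst (gs ! i) of Mono h \<Rightarrow> monotone_fun (length (snd (gs ! i))) h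
         | Om j \<Rightarrow> j < length om \<and> length (snd (gs ! i)) = fst (om ! j))"
      using h[unfolded valid_circuit_def, rule_format, of "Suc i"] by (auto split: glabel.splits)
  qed
  then show "valid_gate om n g \<and> valid_circuit om (Suc n) gs" using h0 by simp
next
  assume h: "valid_gate om n g \<and> valid_circuit om (Suc n) gs"
  show "valid_circuit om n (g # gs)" unfolding valid_circuit_def
  proof (intro allI impI)
    fix i assume i: "i < length (g # gs)"
    show "(\<forall>a\<in>set (snd ((g # gs) ! i)). a < n + i) \<and>
        (case fst ((g # gs) ! i) of Mono h \<Rightarrow> monotone_fun (length (snd ((g # gs) ! i))) h
         | Om j \<Rightarrow> j < length om \<and> length (snd ((g # gs) ! i)) = fst (om ! j))"
    proof (cases i)
      case 0 then show ?thesis using h by (auto simp: valid_gate_def split: glabel.splits)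
    next
      case (Suc j) then show ?thesis using h[THEN conjunct2, unfolded valid_circuit_def, rule_format, of j] i by (auto split: glabel.splits)
    qed
  qed
qed

lemma valid_append: "valid_circuit om n (xs @ ys) \<longleftrightarrow> valid_circuit om n xs \<and> valid_circuit om (n + length xs) ys"
  by (induction xs arbitrary: n) (auto simp: valid_Cons valid_Nil)

lemma valid_single: "valid_circuit om n [g] \<longleftrightarrow> valid_gate om n g"
  by (simp add: valid_Cons valid_Nil)

lemma weight_append: "weight (xs @ ys) = weight xs + weight ys"
  by (simp add: weight_def)



definition is_om :: "glabel \<times> nat list \<Rightarrow> bool" where
  "is_om g = (case fst g of Om _ \<Rightarrow> True | Mono _ \<Rightarrow> False)"

lemma chain_le:
  assumes "is_chain n C" "i \<le> j" "j < length C"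
  shows "tuple_le (C!i) (C!j)"
  using assms(2,3)
proof (induction j)
  case 0 then show ?case by (simp add: tuple_le_refl)
next
  case (Suc j)
  show ?case
  proof (cases "i = Suc j")
    case True then show ?thesis by (simp add: tuple_le_refl)
  next
    case False
    then have "tuple_le (C!i) (C!j)" using Suc by simp
    moreover have "tuple_le (C!j) (C!Suc j)" using assms(1) Suc.prems unfolding is_chain_def by blast
    ultimately show ?thesis by (rule tuple_le_trans)
  qed
qed

locale circ =
  fixes om :: basis_om and n :: nat and gs :: circuit
  assumes V: "valid_circuit om n gs"
begin

abbreviation val :: "bool list \<Rightarrow> nat \<Rightarrow> bool" where "val x v \<equiv> run om gs x ! v"

lemma mono_nodes:
  assumes lx: "length x = n" and ly: "length y = n" and le: "tuple_le x y"
    and omh: "\<And>i. i < m \<Longrightarrow> i < length gs \<Longrightarrow> is_om (gs!i) \<Longrightarrow> val x (n+i) \<le> val y (n+i)"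
  shows "v < n + m \<Longrightarrow> v < n + length gs \<Longrightarrow> val x v \<le> val y v"
proof (induction v rule: less_induct)
  case (less v)
  show ?case
  proof (cases "v < n")
    case True then show ?thesis using input_eq le lx ly by (simp add: tuple_le_def)
  next
    case False
    then obtain i where vi: "v = n + i" by (metis le_add_diff_inverse not_less)
    have im: "i < m" "i < length gs" using less.prems vi by auto
    have args: "\<forall>a\<in>set (snd (gs!i)). a < n + i" and
      lab: "case fst (gs!i) of Mono h \<Rightarrow> monotone_fun (length (snd (gs ! i))) h
         | Om j \<Rightarrow> j < length om \<and> length (snd (gs ! i)) = fst (om ! j)"
      using V im unfolding valid_circuit_def by blast+
    show ?thesis
    proof (cases "fst (gs!i)")
      case (Mono h)
      have mf: "monotone_fun (length (snd (gs!i))) h" using lab Mono by simp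
      have "tuple_le (map (\<lambda>a. val x a) (snd (gs!i))) (map (\<lambda>a. val y a) (snd (gs!i)))"
        unfolding tuple_le_map using args less.IH vi im by force
      then have "h (map (\<lambda>a. val x a) (snd (gs!i))) \<le> h (map (\<lambda>a. val y a) (snd (gs!i)))"
        using mf unfolding monotone_fun_def by (metis length_map)
      then show ?thesis using node_eq[OF V lx im(2)] node_eq[OF V ly im(2)] Mono vi
        by (simp add: apply_label_def)
    next
      case (Om j)
      then show ?thesis using omh[OF im] vi by (simp add: is_om_def)
    qed
  qed
qed

definition Oset :: "nat \<Rightarrow> nat set" where
  "Oset m = {i. i < m \<and> i < length gs \<and> is_om (gs!i)}"

definition Qv :: "nat \<Rightarrow> bool list \<Rightarrow> nat set" where
  "Qv m x = {i \<in> Oset m. val x (n+i)}"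

definition Tc :: "nat \<Rightarrow> bool list list \<Rightarrow> nat" where
  "Tc m C = card {s. Suc s < length C \<and> Qv m (C!s) \<noteq> Qv m (C!Suc s)}"

lemma finite_Oset: "finite (Oset m)" by (simp add: Oset_def)

lemma Qv_sub: "Qv m x \<subseteq> Oset m" by (auto simp: Qv_def)

lemma Q_eq_mono:
  assumes "length x = n" "length y = n" "tuple_le x y" "Qv m x = Qv m y"
    "v < n + m" "v < n + length gs"
  shows "val x v \<le> val y v"
proof (rule mono_nodes[OF assms(1,2,3) _ assms(5,6)])
  fix i assume "i < m" "i < length gs" "is_om (gs!i)"
  then have "i \<in> Oset m" by (simp add: Oset_def)
  then have "val x (n+i) = (i \<in> Qv m x)" "val y (n+i) = (i \<in> Qv m y)" by (auto simp: Qv_def)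
  then show "val x (n+i) \<le> val y (n+i)" using assms(4) by simp
qed

end


context circ begin

lemma A_bound:
  assumes ch: "is_chain n C" and m: "m < length gs" and lab: "fst (gs!m) = Om j"
  shows "card {s. Suc s < length C \<and> Qv m (C!s) = p \<and> Qv m (C!Suc s) = p \<and>
                val (C!s) (n+m) \<noteq> val (C!Suc s) (n+m)} \<le> fst (om!j)"
proof -
  let ?A = "{s. Suc s < length C \<and> Qv m (C!s) = p \<and> Qv m (C!Suc s) = p \<and>
                val (C!s) (n+m) \<noteq> val (C!Suc s) (n+m)}"
  define args where "args = snd (gs!m)"
  define k where "k = length args"
  have args_lt: "\<forall>a\<in>set args. a < n + m" and labv: "j < length om \<and> length args = fst (om ! j)"
    using V m lab unfolding valid_circuit_def args_def by (metis (mono_tags, lifting) glabel.simps(6))+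
  have kj: "k = fst (om!j)" using labv k_def by simp
  have lenC: "\<And>s. s < length C \<Longrightarrow> length (C!s) = n" using ch unfolding is_chain_def by auto
  define U where "U s = {i. i < k \<and> val (C!s) (args!i)}" for s
  have Ufin: "finite (U s)" for s by (simp add: U_def)
  have Uk: "U s \<subseteq> {..<k}" for s by (auto simp: U_def)
  have f1: "U s \<subseteq> U s'" if "s \<le> s'" "s' < length C" "Qv m (C!s) = p" "Qv m (C!s') = p" for s s'
  proof
    fix i assume "i \<in> U s"
    then have i: "i < k" "val (C!s) (args!i)" by (auto simp: U_def)
    have "args!i < n + m" using args_lt i(1) k_def by auto
    moreover have "s < length C" using that by simp
    ultimately have "val (C!s) (args!i) \<le> val (C!s') (args!i)"
      using Q_eq_mono[OF lenC[of s] lenC[of s'] chain_le[OF ch that(1,2)], of m "args!i"] that m by simp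
    then show "i \<in> U s'" using i by (simp add: U_def)
  qed
  have f2: "U s \<subset> U (Suc s)" if "s \<in> ?A" for s
  proof -
    have s: "Suc s < length C" "Qv m (C!s) = p" "Qv m (C!Suc s) = p" "val (C!s) (n+m) \<noteq> val (C!Suc s) (n+m)"
      using that by auto
    have sub: "U s \<subseteq> U (Suc s)" using f1[of s "Suc s"] s by simp
    have "U s \<noteq> U (Suc s)"
    proof
      assume eq: "U s = U (Suc s)"
      have "map (\<lambda>a. val (C!s) a) args = map (\<lambda>a. val (C!Suc s) a) args"
      proof (rule nth_equalityI)
        fix i assume "i < length (map (\<lambda>a. val (C!s) a) args)"
        then have i: "i < k" by (simp add: k_def)
        have "(i \<in> U s) = (i \<in> U (Suc s))" using eq by simp
        then show "map (\<lambda>a. val (C!s) a) args ! i = map (\<lambda>a. val (C!Suc s) a) args ! i"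
          using i by (simp add: U_def k_def)
      qed simp
      note eqm = this
      have a: "val (C!s) (n+m) = snd (om!j) (map (\<lambda>a. val (C!s) a) args)"
        using node_eq[OF V lenC[of s] m] s(1) lab by (simp add: apply_label_def args_def)
      have b: "val (C!Suc s) (n+m) = snd (om!j) (map (\<lambda>a. val (C!Suc s) a) args)"
        using node_eq[OF V lenC[of "Suc s"] m] s(1) lab by (simp add: apply_label_def args_def)
      have "val (C!s) (n+m) = val (C!Suc s) (n+m)" by (simp only: a b eqm)
      then show False using s(4) by simp
    qed
    then show ?thesis using sub by blast
  qed
  have inj: "inj_on (\<lambda>s. card (U (Suc s))) ?A"
  proof (rule inj_onI)
    have lt: "card (U (Suc s)) < card (U (Suc s'))" if "s \<in> ?A" "s' \<in> ?A" "s < s'" for s s'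
    proof -
      have "U (Suc s) \<subseteq> U s'" using f1[of "Suc s" s'] that by auto
      also have "U s' \<subset> U (Suc s')" using f2 that by blast
      finally show ?thesis using Ufin by (simp add: psubset_card_mono)
    qed
    fix s s' assume "s \<in> ?A" "s' \<in> ?A" "card (U (Suc s)) = card (U (Suc s'))"
    note h = this
    show "s = s'"
    proof (rule ccontr)
      assume "s \<noteq> s'"
      then consider "s < s'" | "s' < s" by linarith
      then show False using lt[of s s'] lt[of s' s] h by (cases; simp)
    qed
  qed
  have img: "(\<lambda>s. card (U (Suc s))) ` ?A \<subseteq> {1..k}"
  proof
    fix c assume "c \<in> (\<lambda>s. card (U (Suc s))) ` ?A"
    then obtain s where s: "s \<in> ?A" "c = card (U (Suc s))" by blast
    have "card (U s) < card (U (Suc s))" using f2[OF s(1)] Ufin by (simp add: psubset_card_mono)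
    moreover have "card (U (Suc s)) \<le> k" using card_mono[OF _ Uk[of "Suc s"]] by simp
    ultimately show "c \<in> {1..k}" using s by auto
  qed
  have "card ?A \<le> card {1..k}" by (rule card_inj_on_le[OF inj img]) simp
  then show ?thesis using kj by simp
qed

end


context circ begin

lemma Oset_Suc_same: "\<not> (m < length gs \<and> is_om (gs!m)) \<Longrightarrow> Oset (Suc m) = Oset m"
  by (auto simp: Oset_def less_Suc_eq)

lemma Oset_Suc: "m < length gs \<Longrightarrow> is_om (gs!m) \<Longrightarrow> Oset (Suc m) = insert m (Oset m)"
  by (auto simp: Oset_def less_Suc_eq)

lemma Qv_Suc: "m < length gs \<Longrightarrow> is_om (gs!m) \<Longrightarrow>
   Qv (Suc m) x = Qv m x \<union> {i. i = m \<and> val x (n+m)}"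
  by (auto simp: Qv_def Oset_Suc)

lemma T_bound:
  assumes ch: "is_chain n C" and K: "\<forall>j<length om. fst (om!j) \<le> K"
  shows "Tc m C + K \<le> K * 2 ^ card (Oset m)"
proof (induction m)
  case 0
  have "Oset 0 = {}" by (simp add: Oset_def)
  then have "Tc 0 C = 0" by (simp add: Tc_def Qv_def)
  then show ?case by simp
next
  case (Suc m)
  show ?case
  proof (cases "m < length gs \<and> is_om (gs!m)")
    case False
    then have "Oset (Suc m) = Oset m" by (rule Oset_Suc_same)
    then have "Qv (Suc m) = Qv m" by (simp add: Qv_def fun_eq_iff)
    then show ?thesis using Suc.IH \<open>Oset (Suc m) = Oset m\<close> by (simp add: Tc_def)
  next
    case True
    then obtain j where lab: "fst (gs!m) = Om j" by (cases "fst (gs!m)") (auto simp: is_om_def)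
    have jl: "j < length om" using V True lab unfolding valid_circuit_def by (metis (mono_tags, lifting) glabel.simps(6))
    have mO: "m \<notin> Oset m" by (simp add: Oset_def)
    have cO: "card (Oset (Suc m)) = Suc (card (Oset m))"
      using Oset_Suc[of m] True mO finite_Oset by simp
    define S where "S = {s. Suc s < length C \<and> Qv m (C!s) \<noteq> Qv m (C!Suc s)}"
    define A where "A p = {s. Suc s < length C \<and> Qv m (C!s) = p \<and> Qv m (C!Suc s) = p \<and>
                val (C!s) (n+m) \<noteq> val (C!Suc s) (n+m)}" for p
    have sub: "{s. Suc s < length C \<and> Qv (Suc m) (C!s) \<noteq> Qv (Suc m) (C!Suc s)} \<subseteq> S \<union> (\<Union>p\<in>Pow (Oset m). A p)"
    proof
      fix s assume s: "s \<in> {s. Suc s < length C \<and> Qv (Suc m) (C!s) \<noteq> Qv (Suc m) (C!Suc s)}"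
      show "s \<in> S \<union> (\<Union>p\<in>Pow (Oset m). A p)"
      proof (cases "s \<in> S")
        case False
        then have e: "Qv m (C!s) = Qv m (C!Suc s)" using s by (simp add: S_def)
        have "val (C!s) (n+m) \<noteq> val (C!Suc s) (n+m)"
        proof
          assume "val (C!s) (n+m) = val (C!Suc s) (n+m)"
          then have "Qv (Suc m) (C!s) = Qv (Suc m) (C!Suc s)" using e Qv_Suc[of m] True by simp
          then show False using s by simp
        qed
        then have "s \<in> A (Qv m (C!s))" using s e by (simp add: A_def)
        moreover have "Qv m (C!s) \<in> Pow (Oset m)" using Qv_sub by simp
        ultimately show ?thesis by blast
      qed simp
    qed
    have finS: "finite S" by (rule finite_subset[of _ "{..<length C}"]) (auto simp: S_def)
    have finU: "finite (\<Union>p\<in>Pow (Oset m). A p)"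
      by (rule finite_subset[of _ "{..<length C}"]) (auto simp: A_def)
    have "Tc (Suc m) C \<le> card (S \<union> (\<Union>p\<in>Pow (Oset m). A p))"
      unfolding Tc_def by (rule card_mono[OF _ sub]) (simp add: finS finU)
    also have "\<dots> \<le> card S + card (\<Union>p\<in>Pow (Oset m). A p)" by (rule card_Un_le)
    also have "card (\<Union>p\<in>Pow (Oset m). A p) \<le> (\<Sum>p\<in>Pow (Oset m). card (A p))"
      by (rule card_UN_le) (simp add: finite_Oset)
    also have "\<dots> \<le> card (Pow (Oset m)) * K"
    proof -
      have "card (A p) \<le> K" for p
        using A_bound[OF ch _ lab, of p] True K jl unfolding A_def by fastforce
      then show ?thesis using sum_bounded_above[of "Pow (Oset m)" "\<lambda>p. card (A p)" K] by simp
    qed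
    also have "card (Pow (Oset m)) = 2 ^ card (Oset m)" by (simp add: card_Pow finite_Oset)
    finally have "Tc (Suc m) C \<le> Tc m C + 2 ^ card (Oset m) * K" by (simp add: Tc_def S_def)
    then show ?thesis using Suc.IH cO by (simp add: algebra_simps)
  qed
qed

end


context circ begin

lemma weight_Oset: "weight gs = card (Oset (length gs))"
  unfolding weight_def length_filter_conv_card Oset_def is_om_def by simp

lemma lower_chain:
  assumes R: "realizes om n gs fs" and ch: "is_chain n C" and K: "\<forall>j<length om. fst (om!j) \<le> K"
  shows "decr_chain fs C + K \<le> K * 2 ^ weight gs"
proof -
  have lenC: "\<And>s. s < length C \<Longrightarrow> length (C!s) = n" using ch unfolding is_chain_def by auto
  have "{i. Suc i < length C \<and> jumpF fs (C!i) (C!Suc i)} \<subseteq>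
        {s. Suc s < length C \<and> Qv (length gs) (C!s) \<noteq> Qv (length gs) (C!Suc s)}"
  proof (safe)
    fix s assume s: "Suc s < length C" "jumpF fs (C!s) (C!Suc s)" "Qv (length gs) (C!s) = Qv (length gs) (C!Suc s)"
    then obtain f where f: "f \<in> set fs" "tuple_le (C!s) (C!Suc s)" "f (C!s)" "\<not> f (C!Suc s)"
      unfolding jumpF_def jump_def by auto
    obtain v where v: "v < n + length gs" "\<And>x. length x = n \<Longrightarrow> val x v = f x"
      using R f(1) unfolding realizes_def by blast
    have "val (C!s) v \<le> val (C!Suc s) v"
      using Q_eq_mono[OF lenC lenC f(2) s(3) v(1) v(1)] s(1) by simp
    then show False using v(2)[OF lenC] f s(1) by simp
  qed
  then have "decr_chain fs C \<le> Tc (length gs) C"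
    unfolding decr_chain_def Tc_def by (rule card_mono[rotated]) (rule finite_subset[of _ "{..<length C}"], auto)
  then show ?thesis using T_bound[OF ch K, of "length gs"] weight_Oset by simp
qed

end


definition lev :: "(bool list \<Rightarrow> bool) list \<Rightarrow> nat \<Rightarrow> bool list \<Rightarrow> nat" where
  "lev fs n x = Max {decr_chain fs C | C. is_chain n C \<and> last C = x}"

lemma decr_le_len: "decr_chain fs C \<le> length C"
proof -
  have "{i. Suc i < length C \<and> jumpF fs (C!i) (C!Suc i)} \<subseteq> {..<length C}" by auto
  then show ?thesis unfolding decr_chain_def by (metis card_lessThan card_mono finite_lessThan)
qed

lemma chain_len: "is_chain n C \<Longrightarrow> length C \<le> 2 ^ n"
proof -
  assume ch: "is_chain n C"
  have "set C \<subseteq> {xs. set xs \<subseteq> (UNIV::bool set) \<and> length xs = n}" using ch by (auto simp: is_chain_def)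
  then have "card (set C) \<le> card {xs. set xs \<subseteq> (UNIV::bool set) \<and> length xs = n}"
    by (rule card_mono[rotated]) (use finite_lists_length_eq[of "UNIV::bool set" n] in simp)
  also have "\<dots> = 2 ^ n" using card_lists_length_eq[of "UNIV::bool set" n] by simp
  finally show ?thesis using ch distinct_card[of C] by (simp add: is_chain_def)
qed

lemma finite_decr: "finite {decr_chain fs C | C. is_chain n C \<and> P C}"
proof (rule finite_subset[of _ "{..2^n}"])
  show "{decr_chain fs C | C. is_chain n C \<and> P C} \<subseteq> {..2^n}"
    using decr_le_len chain_len le_trans by fastforce
qed simp

lemma singleton_chain: "length x = n \<Longrightarrow> is_chain n [x]"
  by (simp add: is_chain_def)

lemma decr_le_decrease: "is_chain n C \<Longrightarrow> decr_chain fs C \<le> decrease n fs"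
  unfolding decrease_def using finite_decr[of fs n "\<lambda>_. True"] by (intro Max_ge) auto

lemma lev_attained:
  assumes "length x = n"
  shows "\<exists>C. is_chain n C \<and> last C = x \<and> decr_chain fs C = lev fs n x"
proof -
  have ne: "{decr_chain fs C | C. is_chain n C \<and> last C = x} \<noteq> {}"
    using singleton_chain[OF assms] by fastforce
  have "lev fs n x \<in> {decr_chain fs C | C. is_chain n C \<and> last C = x}"
    unfolding lev_def by (rule Max_in[OF finite_decr ne])
  then show ?thesis by auto
qed

lemma lev_le: "length x = n \<Longrightarrow> lev fs n x \<le> decrease n fs"
  using lev_attained decr_le_decrease by metis

lemma lev_ge: "is_chain n C \<Longrightarrow> last C = x \<Longrightarrow> decr_chain fs C \<le> lev fs n x"
  unfolding lev_def using finite_decr[of fs n "\<lambda>C. last C = x"] by (intro Max_ge) auto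

lemma lev_mono:
  assumes lx: "length x = n" and ly: "length y = n" and le: "tuple_le y x"
  shows "lev fs n y + (if jumpF fs y x then 1 else 0) \<le> lev fs n x"
proof (cases "y = x")
  case True
  then have "\<not> jumpF fs y x" by (auto simp: jumpF_def jump_def)
  then show ?thesis using True by simp
next
  case False
  obtain C where C: "is_chain n C" "last C = y" "decr_chain fs C = lev fs n y"
    using lev_attained[OF ly] by blast
  have Cne: "C \<noteq> []" using C(1) by (simp add: is_chain_def)
  have lastn: "C ! (length C - 1) = y" using C(2) Cne by (simp add: last_conv_nth)
  have xnot: "x \<notin> set C"
  proof
    assume "x \<in> set C"
    then obtain i where i: "i < length C" "C!i = x" by (auto simp: in_set_conv_nth)
    have "tuple_le (C!i) (C!(length C - 1))" using chain_le[OF C(1), of i "length C - 1"] i Cne by simp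
    then have "tuple_le x y" using i lastn by simp
    then show False using tuple_le_antisym[OF le] False by simp
  qed
  define C' where "C' = C @ [x]"
  have ch': "is_chain n C'"
    unfolding is_chain_def C'_def
  proof (intro conjI allI impI)
    show "distinct (C @ [x])" using xnot C(1) by (simp add: is_chain_def)
    show "\<forall>a\<in>set (C @ [x]). length a = n" using C(1) lx by (simp add: is_chain_def)
    fix i assume i: "Suc i < length (C @ [x])"
    show "tuple_le ((C @ [x]) ! i) ((C @ [x]) ! Suc i)"
    proof (cases "Suc i < length C")
      case True then show ?thesis using C(1) by (simp add: nth_append is_chain_def)
    next
      case False
      then have "i = length C - 1" using i by simp
      then show ?thesis using lastn le Cne False by (simp add: nth_append)
    qed
  qed simp
  have last': "last C' = x" by (simp add: C'_def)
  have sub: "{i. Suc i < length C \<and> jumpF fs (C!i) (C!Suc i)} \<union>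
      (if jumpF fs y x then {length C - 1} else {}) \<subseteq> {i. Suc i < length C' \<and> jumpF fs (C'!i) (C'!Suc i)}"
    using lastn Cne by (auto simp: C'_def nth_append)
  have disj: "{i. Suc i < length C \<and> jumpF fs (C!i) (C!Suc i)} \<inter> (if jumpF fs y x then {length C - 1} else {}) = {}"
    using Cne by auto
  have "decr_chain fs C + (if jumpF fs y x then 1 else 0) =
     card ({i. Suc i < length C \<and> jumpF fs (C!i) (C!Suc i)} \<union> (if jumpF fs y x then {length C - 1} else {}))"
    unfolding decr_chain_def by (subst card_Un_disjoint[OF _ _ disj]) (auto intro: finite_subset[of _ "{..<length C}"])
  also have "\<dots> \<le> decr_chain fs C'"
    unfolding decr_chain_def by (rule card_mono[OF _ sub]) (rule finite_subset[of _ "{..<length C'}"], auto)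
  also have "\<dots> \<le> lev fs n x" by (rule lev_ge[OF ch' last'])
  finally show ?thesis using C(3) by simp
qed



locale lvl =
  fixes L :: "bool list \<Rightarrow> nat" and r :: nat
begin

definition q :: "nat \<Rightarrow> bool list \<Rightarrow> nat" where "q t x = L x div 2 ^ (r - t)"
definition bt :: "nat \<Rightarrow> bool list \<Rightarrow> bool" where "bt t x = odd (q (Suc t) x)"

lemma q_Suc: "t < r \<Longrightarrow> q (Suc t) x = 2 * q t x + (if bt t x then 1 else 0)"
proof -
  assume t: "t < r"
  have e: "(2::nat) ^ (r - t) = 2 ^ (r - Suc t) * 2" using t
    by (metis Suc_diff_Suc power_Suc2)
  have "q t x = q (Suc t) x div 2" unfolding q_def e by (simp add: div_mult2_eq)
  moreover have "q (Suc t) x mod 2 = (if odd (q (Suc t) x) then 1 else 0)"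
    by (simp add: odd_iff_mod_2_eq_one even_iff_mod_2_eq_zero)
  ultimately show ?thesis unfolding bt_def by (metis div_mult_mod_eq mult.commute)
qed

lemma q_eq:
  assumes le: "L y \<le> L x" and lx: "L x < 2 ^ r" and ly: "L y < 2 ^ r"
    and bs: "\<forall>s<t. bt s x \<longrightarrow> bt s y" and t: "t \<le> r"
  shows "q t y = q t x"
  using bs t
proof (induction t)
  case 0
  then show ?case using lx ly by (simp add: q_def)
next
  case (Suc t)
  then have ih: "q t y = q t x" by simp
  have "q (Suc t) y \<le> q (Suc t) x" unfolding q_def using le by (simp add: div_le_mono)
  moreover have "q (Suc t) x \<le> q (Suc t) y" using q_Suc[of t x] q_Suc[of t y] Suc.prems ih by auto
  ultimately show ?case by simp
qed

lemma b_mono: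
  assumes le: "L y \<le> L x" and lx: "L x < 2 ^ r" and ly: "L y < 2 ^ r"
    and bs: "\<forall>s<t. bt s x \<longrightarrow> bt s y" and t: "t < r" and "bt t y"
  shows "bt t x"
proof -
  have e: "q t y = q t x" using q_eq[OF le lx ly bs] t by simp
  have "q (Suc t) y \<le> q (Suc t) x" unfolding q_def using le by (simp add: div_le_mono)
  then show ?thesis using q_Suc[of t x] q_Suc[of t y] t e \<open>bt t y\<close> by (auto split: if_splits)
qed

lemma L_eq:
  assumes le: "L y \<le> L x" and lx: "L x < 2 ^ r" and ly: "L y < 2 ^ r"
    and bs: "\<forall>s<r. bt s x \<longrightarrow> bt s y"
  shows "L y = L x"
  using q_eq[OF le lx ly bs] by (simp add: q_def)

end



lemma run_indep:
  "(\<forall>g\<in>set G. \<forall>a\<in>set (snd g). a < length W) \<Longrightarrow>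
   run om G W = W @ map (\<lambda>g. apply_label om (fst g) (map ((!) W) (snd g))) G"
proof (induction G arbitrary: W)
  case Nil then show ?case by simp
next
  case (Cons g G)
  obtain l args where g: "g = (l, args)" by fastforce
  define v where "v = apply_label om l (map ((!) W) args)"
  have "run om (g # G) W = run om G (W @ [v])" using g v_def by simp
  also have "\<dots> = (W @ [v]) @ map (\<lambda>g. apply_label om (fst g) (map ((!) (W @ [v])) (snd g))) G"
    using Cons.prems by (intro Cons.IH) (force simp: less_Suc_eq)
  also have "map (\<lambda>g. apply_label om (fst g) (map ((!) (W @ [v])) (snd g))) G =
             map (\<lambda>g. apply_label om (fst g) (map ((!) W) (snd g))) G"
  proof (rule map_cong[OF refl])
    fix g' assume "g' \<in> set G"
    then have "\<forall>a\<in>set (snd g'). a < length W" using Cons.prems by simp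
    then have "map ((!) (W @ [v])) (snd g') = map ((!) W) (snd g')" by (auto simp: nth_append)
    then show "apply_label om (fst g') (map ((!) (W @ [v])) (snd g')) = apply_label om (fst g') (map ((!) W) (snd g'))"
      by (simp only:)
  qed
  finally show ?case using g v_def by simp
qed

lemma valid_all: "(\<forall>g\<in>set G. valid_gate om m g) \<Longrightarrow> valid_circuit om m G"
proof -
  assume h: "\<forall>g\<in>set G. valid_gate om m g"
  show ?thesis unfolding valid_circuit_def
  proof (intro allI impI)
    fix i assume "i < length G"
    then have "valid_gate om m (G!i)" using h nth_mem by blast
    then show "(\<forall>a\<in>set (snd (G ! i)). a < m + i) \<and>
        (case fst (G ! i) of Mono h \<Rightarrow> monotone_fun (length (snd (G ! i))) h
         | Om j \<Rightarrow> j < length om \<and> length (snd (G ! i)) = fst (om ! j))"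
      unfolding valid_gate_def using trans_less_add1 by blast
  qed
qed

locale constr =
  fixes om :: basis_om and n :: nat and fs :: "(bool list \<Rightarrow> bool) list" and r :: nat
    and a :: "bool list" and b :: "bool list"
  assumes om0: "0 < length om" and la: "length a = fst (om!0)" and lb: "length b = fst (om!0)"
   and ab: "tuple_le a b" and wa: "snd (om!0) a" and wb: "\<not> snd (om!0) b"
   and lvbound: "\<And>x. length x = n \<Longrightarrow> lev fs n x < 2^r"
begin

sublocale lvl "lev fs n" r .

definition zt :: "nat \<Rightarrow> bool list \<Rightarrow> bool" where "zt t x = (\<not> bt t x)"
definition negargs :: "nat \<Rightarrow> nat list" where
  "negargs u = map (\<lambda>j. if a!j = b!j then (if a!j then Suc n else n) else u) [0..<fst (om!0)]"
definition ins :: "nat \<Rightarrow> nat list" where "ins t = [0..<n] @ map (\<lambda>s. n+3+2*s) [0..<t]"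
definition E :: "nat \<Rightarrow> bool list \<Rightarrow> bool list" where "E t x = x @ map (\<lambda>s. zt s x) [0..<t]"
definition upc :: "(bool list \<Rightarrow> bool) \<Rightarrow> nat \<Rightarrow> bool list \<Rightarrow> bool" where
  "upc P t = (\<lambda>v. \<exists>y. length y = n \<and> P y \<and> tuple_le (E t y) v)"
definition rnd :: "nat \<Rightarrow> circuit" where
  "rnd t = [(Mono (upc (bt t) t), ins t), (Om 0, negargs (n+2+2*t))]"
definition rounds :: "nat \<Rightarrow> circuit" where "rounds t = concat (map rnd [0..<t])"
definition consts2 :: circuit where "consts2 = [(Mono (\<lambda>_. False), []), (Mono (\<lambda>_. True), [])]"
definition fin :: circuit where "fin = map (\<lambda>f. (Mono (upc f r), ins r)) fs"
definition vals :: "nat \<Rightarrow> bool list \<Rightarrow> bool list" where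
  "vals t x = concat (map (\<lambda>s. [bt s x, zt s x]) [0..<t])"
definition W :: "nat \<Rightarrow> bool list \<Rightarrow> bool list" where "W t x = x @ [False, True] @ vals t x"

lemma upc_mono: "monotone_fun m (upc P t)"
  unfolding monotone_fun_def upc_def using tuple_le_trans by fastforce

lemma upc_val:
  assumes "length x = n" "\<And>y. length y = n \<Longrightarrow> P y \<Longrightarrow> tuple_le (E t y) (E t x) \<Longrightarrow> P x"
  shows "upc P t (E t x) = P x"
  unfolding upc_def using assms tuple_le_refl by blast

lemma E_le:
  assumes "length y = n" "length x = n"
  shows "tuple_le (E t y) (E t x) \<longleftrightarrow> tuple_le y x \<and> (\<forall>s<t. bt s x \<longrightarrow> bt s y)"
  unfolding E_def using assms by (auto simp: tuple_le_append tuple_le_map zt_def)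

lemma lev_le': "length y = n \<Longrightarrow> length x = n \<Longrightarrow> tuple_le y x \<Longrightarrow> lev fs n y \<le> lev fs n x"
  using lev_mono[of x n y fs] by simp

lemma hb_val: "length x = n \<Longrightarrow> t < r \<Longrightarrow> upc (bt t) t (E t x) = bt t x"
proof (rule upc_val)
  fix y assume "length x = n" "t < r" "length y = n" "bt t y" "tuple_le (E t y) (E t x)"
  then show "bt t x" using b_mono[of y x t] lev_le' lvbound E_le by blast
qed

lemma hf_val: "length x = n \<Longrightarrow> f \<in> set fs \<Longrightarrow> upc f r (E r x) = f x"
proof (rule upc_val)
  fix y assume x: "length x = n" and f: "f \<in> set fs" and y: "length y = n" "f y" "tuple_le (E r y) (E r x)"
  have le: "tuple_le y x" and bs: "\<forall>s<r. bt s x \<longrightarrow> bt s y" using E_le[OF y(1) x] y(3) by auto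
  have eq: "lev fs n y = lev fs n x" using L_eq[OF lev_le'[OF y(1) x le] lvbound[OF x] lvbound[OF y(1)] bs] .
  show "f x"
  proof (rule ccontr)
    assume "\<not> f x"
    then have "jumpF fs y x" using f le y(2) by (auto simp: jumpF_def jump_def)
    then show False using lev_mono[OF x y(1) le, of fs] eq by simp
  qed
qed

lemma vals_length: "length (vals t x) = 2 * t"
  by (induction t) (auto simp: vals_def)

lemma vals_Suc: "vals (Suc t) x = vals t x @ [bt t x, zt t x]"
  by (simp add: vals_def)

lemma vals_nth: "s < t \<Longrightarrow> vals t x ! (2*s) = bt s x \<and> vals t x ! Suc (2*s) = zt s x"
proof (induction t)
  case 0 then show ?case by simp
next
  case (Suc t)
  show ?case
  proof (cases "s < t")
    case True then show ?thesis using Suc by (simp add: vals_Suc nth_append vals_length)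
  next
    case False then have "s = t" using Suc by simp
    then show ?thesis by (simp add: vals_Suc nth_append vals_length)
  qed
qed

lemma W_length: "length x = n \<Longrightarrow> length (W t x) = n + 2 + 2 * t"
  by (simp add: W_def vals_length)

lemma W_x: "length x = n \<Longrightarrow> i < n \<Longrightarrow> W t x ! i = x ! i"
  by (simp add: W_def nth_append)

lemma W_z: "length x = n \<Longrightarrow> s < t \<Longrightarrow> W t x ! (n+3+2*s) = zt s x"
proof -
  assume x: "length x = n" and s: "s < t"
  have "W t x ! (n+3+2*s) = ([False, True] @ vals t x) ! (3 + 2*s)"
    using x by (simp add: W_def nth_append)
  also have "\<dots> = vals t x ! Suc (2*s)" by simp
  finally show ?thesis using vals_nth[OF s] by simp
qed

lemma W_ins: "length x = n \<Longrightarrow> t' \<le> t \<Longrightarrow> map ((!) (W t x)) (ins t') = E t' x"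
proof -
  assume x: "length x = n" and t: "t' \<le> t"
  have 1: "map ((!) (W t x)) [0..<n] = x"
    by (rule nth_equalityI) (use x W_x in auto)
  have 2: "map ((!) (W t x)) (map (\<lambda>s. n+3+2*s) [0..<t']) = map (\<lambda>s. zt s x) [0..<t']"
    using W_z[OF x] t by auto
  show ?thesis using 1 2 by (simp add: ins_def E_def)
qed

lemma negargs_val:
  assumes "Wb ! n = False" "Wb ! Suc n = True" "Wb ! u = c"
  shows "map ((!) Wb) (negargs u) = (if c then b else a)"
proof (rule nth_equalityI)
  show "length (map ((!) Wb) (negargs u)) = length (if c then b else a)"
    using la lb by (simp add: negargs_def)
next
  fix j assume "j < length (map ((!) Wb) (negargs u))"
  then have j: "j < fst (om!0)" by (simp add: negargs_def)
  have "a!j \<le> b!j" using ab j la unfolding tuple_le_def by simp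
  then show "map ((!) Wb) (negargs u) ! j = (if c then b else a) ! j"
    using j assms by (cases "a!j"; cases "b!j"; simp add: negargs_def)
qed

lemma rounds_Suc: "rounds (Suc t) = rounds t @ rnd t"
  by (simp add: rounds_def)

lemma run_consts: "run om consts2 x = x @ [False, True]"
  by (simp add: consts2_def apply_label_def)

lemma run_rounds: "length x = n \<Longrightarrow> t \<le> r \<Longrightarrow> run om (rounds t) (x @ [False, True]) = W t x"
proof (induction t)
  case 0 then show ?case by (simp add: rounds_def W_def vals_def)
next
  case (Suc t)
  then have ih: "run om (rounds t) (x @ [False, True]) = W t x" by simp
  have t: "t < r" using Suc by simp
  have g1: "apply_label om (Mono (upc (bt t) t)) (map ((!) (W t x)) (ins t)) = bt t x"
    using W_ins[OF Suc.prems(1), of t t] hb_val[OF Suc.prems(1) t] by (simp add: apply_label_def)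
  have lw: "length (W t x) = n + 2 + 2*t" using W_length[OF Suc.prems(1)] .
  have "map ((!) (W t x @ [bt t x])) (negargs (n+2+2*t)) = (if bt t x then b else a)"
  proof (rule negargs_val)
    show "(W t x @ [bt t x]) ! n = False" using lw Suc.prems(1) by (simp add: nth_append W_def)
    show "(W t x @ [bt t x]) ! Suc n = True" using lw Suc.prems(1) by (simp add: nth_append W_def)
    show "(W t x @ [bt t x]) ! (n+2+2*t) = bt t x" using lw by (simp add: nth_append)
  qed
  then have g2: "apply_label om (Om 0) (map ((!) (W t x @ [bt t x])) (negargs (n+2+2*t))) = zt t x"
    using wa wb by (simp add: apply_label_def zt_def)
  have "run om (rounds (Suc t)) (x @ [False, True]) = run om (rnd t) (W t x)"
    by (simp add: rounds_Suc run_append ih)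
  also have "\<dots> = W t x @ [bt t x, zt t x]"
    using g1 g2 by (simp add: rnd_def)
  also have "\<dots> = W (Suc t) x" by (simp add: W_def vals_Suc)
  finally show ?case .
qed

lemma run_fin: "length x = n \<Longrightarrow> run om fin (W r x) = W r x @ map (\<lambda>f. f x) fs"
proof -
  assume x: "length x = n"
  have args: "\<forall>g\<in>set fin. \<forall>a\<in>set (snd g). a < length (W r x)"
    using W_length[OF x] by (auto simp: fin_def ins_def)
  have "map (\<lambda>g. apply_label om (fst g) (map ((!) (W r x)) (snd g))) fin = map (\<lambda>f. f x) fs"
    using W_ins[OF x, of r r] hf_val[OF x] by (auto simp: fin_def apply_label_def)
  then show ?thesis using run_indep[OF args] by simp
qed

definition gs :: circuit where "gs = consts2 @ rounds r @ fin"

lemma rounds_length: "length (rounds t) = 2 * t"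
  by (induction t) (auto simp: rounds_Suc rnd_def rounds_def)

lemma run_gs: "length x = n \<Longrightarrow> run om gs x = W r x @ map (\<lambda>f. f x) fs"
  by (simp add: gs_def run_append run_consts run_rounds run_fin)

lemma gs_length: "length gs = 2 + 2 * r + length fs"
  by (simp add: gs_def consts2_def rounds_length fin_def)

lemma gs_realizes: "realizes om n gs fs"
  unfolding realizes_def
proof
  fix f assume "f \<in> set fs"
  then obtain i where i: "i < length fs" "fs ! i = f" by (auto simp: in_set_conv_nth)
  have "n + 2 + 2*r + i < n + length gs" using i gs_length by simp
  moreover have "\<forall>x. length x = n \<longrightarrow> run om gs x ! (n + 2 + 2*r + i) = f x"
    using i W_length by (auto simp: run_gs nth_append)
  ultimately show "\<exists>v<n + length gs. \<forall>x. length x = n \<longrightarrow> run om gs x ! v = f x" by blast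
qed

lemma weight_rounds: "weight (rounds t) = t"
  by (induction t) (auto simp: rounds_Suc weight_append rnd_def weight_def rounds_def)

lemma gs_weight: "weight gs = r"
proof -
  have "weight fin = 0" by (simp add: weight_def fin_def filter_empty_conv)
  moreover have "weight consts2 = 0" by (simp add: weight_def consts2_def)
  ultimately show ?thesis by (simp add: gs_def weight_append weight_rounds)
qed

lemma valid_rounds: "t \<le> r \<Longrightarrow> valid_circuit om (n+2) (rounds t)"
proof (induction t)
  case 0 then show ?case by (simp add: rounds_def valid_Nil)
next
  case (Suc t)
  have v1: "valid_gate om (n+2+2*t) (Mono (upc (bt t) t), ins t)"
    by (auto simp: valid_gate_def ins_def upc_mono)
  have v2: "valid_gate om (Suc (n+2+2*t)) (Om 0, negargs (n+2+2*t))"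
    using om0 by (auto simp: valid_gate_def negargs_def)
  have "valid_circuit om (n+2+2*t) (rnd t)"
    using v1 v2 by (simp add: rnd_def valid_Cons valid_Nil)
  then show ?case using Suc by (simp add: rounds_Suc valid_append rounds_length)
qed

lemma gs_valid: "valid_circuit om n gs"
proof -
  have c: "valid_circuit om n consts2"
    by (simp add: consts2_def valid_Cons valid_Nil valid_gate_def monotone_fun_def)
  have f: "valid_circuit om (n + 2 + 2*r) fin"
    by (rule valid_all) (auto simp: fin_def valid_gate_def ins_def upc_mono)
  have l: "length consts2 = 2" by (simp add: consts2_def)
  have "valid_circuit om (n + length consts2) (rounds r @ fin)"
    using f valid_rounds[of r] l by (simp add: valid_append rounds_length)
  then show ?thesis using c unfolding gs_def valid_append by simp
qed

end


lemma l1: fixes d r :: nat assumes "r = nat \<lceil>log 2 (real d + 1)\<rceil>" shows "d < 2 ^ r"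
  using assms nat_less_real_le power_of_nat_log_ge by force

lemma l2: fixes d w :: nat assumes "d + 1 \<le> 2 ^ w" shows "\<lceil>log 2 (real d + 1)\<rceil> \<le> int w"
  by (metis assms log2_of_power_le nat_ceiling_le_eq nat_le_iff of_nat_1
    of_nat_add trans_less_add2 zero_less_one)

lemma l3: fixes d :: nat shows "0 \<le> \<lceil>log 2 (real d + 1)\<rceil>"
  by (smt (verit, ccfv_SIG) ceiling_mono ceiling_zero of_nat_0_le_iff zero_le_log_cancel_iff)

theorem theorem1:
  fixes om :: basis_om
  assumes "om \<noteq> []"
    and "\<forall>(k, w)\<in>set om. \<not> monotone_fun k w"
  shows "\<exists>c::int. \<forall>(n::nat) (fs :: (bool list \<Rightarrow> bool) list).
           \<lceil>log 2 (real (decrease n fs) + 1)\<rceil> - c \<le> int (inv_complexity om n fs) \<and>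
           int (inv_complexity om n fs) \<le> \<lceil>log 2 (real (decrease n fs) + 1)\<rceil>"
proof -
  have om0: "0 < length om" using assms(1) by simp
  have "\<not> monotone_fun (fst (om!0)) (snd (om!0))"
    using assms(2) nth_mem[OF om0] by (cases "om!0") auto
  then obtain a b where ab: "length a = fst (om!0)" "length b = fst (om!0)" "tuple_le a b"
      "snd (om!0) a" "\<not> snd (om!0) b"
    unfolding monotone_fun_def by (metis le_boolI)
  define K where "K = Suc (Max (fst ` set om))"
  have K: "\<forall>j<length om. fst (om!j) \<le> K"
    unfolding K_def by (auto intro!: le_SucI Max_ge)
  have K2: "K \<le> 2 ^ K" by (simp add: less_imp_le)
  show ?thesis
  proof (intro exI[of _ "int K"] allI)
    fix n fs
    define d where "d = decrease n fs"
    define r where "r = nat \<lceil>log 2 (real d + 1)\<rceil>"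
    have dr: "d < 2 ^ r" using l1 r_def by simp
    interpret cs: constr om n fs r a b
    proof
      fix x :: "bool list" assume "length x = n"
      then show "lev fs n x < 2 ^ r" using lev_le[of x n fs] dr d_def by simp
    qed (use om0 ab in auto)
    have ex: "\<exists>gs. valid_circuit om n gs \<and> realizes om n gs fs \<and> weight gs = r"
      using cs.gs_valid cs.gs_realizes cs.gs_weight by blast
    have up: "inv_complexity om n fs \<le> r"
      unfolding inv_complexity_def by (rule Least_le) (use ex in blast)
    obtain gs0 where g0: "valid_circuit om n gs0" "realizes om n gs0 fs" "weight gs0 = inv_complexity om n fs"
      unfolding inv_complexity_def using LeastI_ex[of "\<lambda>w. \<exists>gs. valid_circuit om n gs \<and> realizes om n gs fs \<and> weight gs = w"] ex
      by blast
    interpret cc: circ om n gs0 by (rule circ.intro[OF g0(1)])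
    have ne: "{decr_chain fs C | C. is_chain n C \<and> True} \<noteq> {}"
      using singleton_chain[of "replicate n False" n] by fastforce
    have "d \<in> {decr_chain fs C | C. is_chain n C \<and> True}"
      unfolding d_def decrease_def using Max_in[OF finite_decr ne] by simp
    then obtain C where C: "is_chain n C" "d = decr_chain fs C" by blast
    have "d + K \<le> K * 2 ^ inv_complexity om n fs"
      using cc.lower_chain[OF g0(2) C(1) K] C(2) g0(3) by simp
    moreover have "K * 2 ^ inv_complexity om n fs \<le> 2 ^ K * 2 ^ inv_complexity om n fs"
      using K2 by simp
    moreover have k1: "1 \<le> K" by (simp add: K_def)
    ultimately have "d + 1 \<le> 2 ^ K * 2 ^ inv_complexity om n fs" by linarith
    then have "d + 1 \<le> 2 ^ (inv_complexity om n fs + K)"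
      by (simp add: power_add mult.commute)
    then have "\<lceil>log 2 (real d + 1)\<rceil> \<le> int (inv_complexity om n fs + K)" by (rule l2)
    moreover have "int (inv_complexity om n fs) \<le> \<lceil>log 2 (real d + 1)\<rceil>"
      using up l3[of d] r_def by linarith
    ultimately show "\<lceil>log 2 (real (decrease n fs) + 1)\<rceil> - int K \<le> int (inv_complexity om n fs) \<and>
           int (inv_complexity om n fs) \<le> \<lceil>log 2 (real (decrease n fs) + 1)\<rceil>"
      using d_def by simp
  qed
qed


end
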